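(* Let $D^p$ be an instance of a PDB schema $\mathcal{D}^p$ that is consistent w.r.t. a set $\mathcal{IC}$ of denial constraints, let $T$ be a set of tuples of $D^p$, and let $H=HG(D^p,\mathcal{IC})$. If either (i) the tuples in $T$ are pairwise disconnected in $H$, or (ii) $Int(T,H)$ is a matryoshka, then $p^{\min}(T)=\max\{0,\sum_{t\in T}p(t)-|T|+1\}$. Otherwise, $\max\{0,\sum_{t\in T}p(t)-|T|+1\}$ is a lower bound for $p^{\min}(T)$.
   Context: A PDB instance $D^p$ is a finite set of tuples, each with a probability $p(t)\in[0,1]$. Possible worlds are subsets of its tuples; an interpretation is a probability distribution $Pr$ on the possible worlds with $\sum_{w\ni t}Pr(w)=p(t)$ for each tuple $t$. Denial constraints are formulas $\forall\vec x.\neg[R_1(\vec x_1)\wedge\dots\wedge R_m(\vec x_m)\wedge\phi]$ with $\phi$ a conjunction of comparisons ($=,\neq,\le,\ge,<,>$) among variables/constants. A model w.r.t. $\mathcal{IC}$ is an interpretation giving probability $0$ to every world violating a constraint of $\mathcal{IC}$; $D^p$ is consistent if a model exists. A conflicting set is a minimal set of tuples such that every world containing it violates $\mathcal{IC}$; the conflict hypergraph $HG(D^p,\mathcal{IC})$ has the tuples as nodes and the conflicting sets as hyperedges. $p^{\min}(T)=\min_{Pr \text{ model}}\sum_{w\supseteq T}Pr(w)$. Two nodes are disconnected if no path (sequence of distinct hyperedges, consecutive ones intersecting, the first containing one node and the last the other) joins them. $Int(T,H)$ denotes the set of intersections of $T$ with the hyperedges of $H$. A set of sets is a matryoshka if it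 is totally ordered by strict inclusion. *)

theory Defs
  imports Complex_Main
begin

text \<open>A tuple is a relation name together with a list of values; values come from a
  linearly ordered domain (needed for the comparisons of denial constraints).\<close>
type_synonym ('r, 'v) tuple = "'r \<times> 'v list"

datatype ('x, 'v) trm = Var 'x | Const 'v

datatype cop = CEq | CNeq | CLe | CGe | CLt | CGt

fun cmp :: "cop \<Rightarrow> 'v::linorder \<Rightarrow> 'v \<Rightarrow> bool" where
  "cmp CEq a b = (a = b)"
| "cmp CNeq a b = (a \<noteq> b)"
| "cmp CLe a b = (a \<le> b)"
| "cmp CGe a b = (a \<ge> b)"
| "cmp CLt a b = (a < b)"
| "cmp CGt a b = (a > b)"

fun eval_trm :: "('x \<Rightarrow> 'v) \<Rightarrow> ('x, 'v) trm \<Rightarrow> 'v" where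
  "eval_trm \<sigma> (Var x) = \<sigma> x"
| "eval_trm \<sigma> (Const c) = c"

text \<open>A denial constraint  forall x. not [R1(x1) and ... and Rm(xm) and phi]:
  a list of relational atoms and a list of comparisons (the conjunction phi).\<close>
record ('r, 'x, 'v) denial =
  atoms :: "('r \<times> ('x, 'v) trm list) list"
  comps :: "(('x, 'v) trm \<times> cop \<times> ('x, 'v) trm) list"

definition violates :: "('r, 'v::linorder) tuple set \<Rightarrow> ('r, 'x, 'v) denial \<Rightarrow> bool" where
  "violates w c \<longleftrightarrow> (\<exists>\<sigma>.
      (\<forall>(R, ts) \<in> set (atoms c). (R, map (eval_trm \<sigma>) ts) \<in> w) \<and>
      (\<forall>(a, op, b) \<in> set (comps c). cmp op (eval_trm \<sigma> a) (eval_trm \<sigma> b)))"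

definition violates_IC :: "('r, 'v::linorder) tuple set \<Rightarrow> ('r, 'x, 'v) denial set \<Rightarrow> bool" where
  "violates_IC w IC \<longleftrightarrow> (\<exists>c \<in> IC. violates w c)"

definition pdb :: "('r, 'v) tuple set \<Rightarrow> (('r, 'v) tuple \<Rightarrow> real) \<Rightarrow> bool" where
  "pdb D p \<longleftrightarrow> finite D \<and> (\<forall>t \<in> D. 0 \<le> p t \<and> p t \<le> 1)"

definition is_interpretation :: "('r, 'v) tuple set \<Rightarrow> (('r, 'v) tuple \<Rightarrow> real)
    \<Rightarrow> (('r, 'v) tuple set \<Rightarrow> real) \<Rightarrow> bool" where
  "is_interpretation D p Pr \<longleftrightarrow>
     (\<forall>w \<in> Pow D. 0 \<le> Pr w) \<and> (\<Sum>w \<in> Pow D. Pr w) = 1 \<and>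
     (\<forall>t \<in> D. (\<Sum>w \<in> {w \<in> Pow D. t \<in> w}. Pr w) = p t)"

definition is_model :: "('r, 'v::linorder) tuple set \<Rightarrow> (('r, 'v) tuple \<Rightarrow> real)
    \<Rightarrow> ('r, 'x, 'v) denial set \<Rightarrow> (('r, 'v) tuple set \<Rightarrow> real) \<Rightarrow> bool" where
  "is_model D p IC Pr \<longleftrightarrow> is_interpretation D p Pr \<and>
     (\<forall>w \<in> Pow D. violates_IC w IC \<longrightarrow> Pr w = 0)"

definition consistent :: "('r, 'v::linorder) tuple set \<Rightarrow> (('r, 'v) tuple \<Rightarrow> real)
    \<Rightarrow> ('r, 'x, 'v) denial set \<Rightarrow> bool" where
  "consistent D p IC \<longleftrightarrow> (\<exists>Pr. is_model D p IC Pr)"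

definition p_min :: "('r, 'v::linorder) tuple set \<Rightarrow> (('r, 'v) tuple \<Rightarrow> real)
    \<Rightarrow> ('r, 'x, 'v) denial set \<Rightarrow> ('r, 'v) tuple set \<Rightarrow> real" where
  "p_min D p IC T = Inf {(\<Sum>w \<in> {w \<in> Pow D. T \<subseteq> w}. Pr w) | Pr. is_model D p IC Pr}"

definition forces_violation :: "('r, 'v::linorder) tuple set \<Rightarrow> ('r, 'x, 'v) denial set
    \<Rightarrow> ('r, 'v) tuple set \<Rightarrow> bool" where
  "forces_violation D IC X \<longleftrightarrow> (\<forall>w \<in> Pow D. X \<subseteq> w \<longrightarrow> violates_IC w IC)"

definition conflicting_set :: "('r, 'v::linorder) tuple set \<Rightarrow> ('r, 'x, 'v) denial set
    \<Rightarrow> ('r, 'v) tuple set \<Rightarrow> bool" where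
  "conflicting_set D IC X \<longleftrightarrow> X \<subseteq> D \<and> forces_violation D IC X \<and>
     (\<forall>Y. Y \<subset> X \<longrightarrow> \<not> forces_violation D IC Y)"

text \<open>Hyperedges of HG(D, IC) (its nodes are the tuples of D).\<close>
definition hyperedges :: "('r, 'v::linorder) tuple set \<Rightarrow> ('r, 'x, 'v) denial set
    \<Rightarrow> ('r, 'v) tuple set set" where
  "hyperedges D IC = {X. conflicting_set D IC X}"

definition connected_in :: "'a set set \<Rightarrow> 'a \<Rightarrow> 'a \<Rightarrow> bool" where
  "connected_in E t t' \<longleftrightarrow> (\<exists>es. es \<noteq> [] \<and> distinct es \<and> set es \<subseteq> E \<and>
      (\<forall>i. Suc i < length es \<longrightarrow> es ! i \<inter> es ! Suc i \<noteq> {}) \<and>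
      t \<in> hd es \<and> t' \<in> last es)"

definition disconnected_in :: "'a set set \<Rightarrow> 'a \<Rightarrow> 'a \<Rightarrow> bool" where
  "disconnected_in E t t' \<longleftrightarrow> \<not> connected_in E t t'"

definition Int_sets :: "'a set \<Rightarrow> 'a set set \<Rightarrow> 'a set set" where
  "Int_sets T E = {T \<inter> e | e. e \<in> E}"

definition matryoshka :: "'a set set \<Rightarrow> bool" where
  "matryoshka S \<longleftrightarrow> (\<forall>A \<in> S. \<forall>B \<in> S. A \<noteq> B \<longrightarrow> A \<subset> B \<or> B \<subset> A)"

end

theory Submission
  imports Defs
begin

lemma sum_ofbool_subset:
  fixes f :: "'a \<Rightarrow> real"
  assumes "finite W" "A \<subseteq> W"
  shows "(\<Sum>v\<in>W. of_bool (v\<in>A) * f v) = sum f A"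
proof -
  have "(\<Sum>v\<in>W. of_bool (v\<in>A) * f v) = (\<Sum>v\<in>W. if v \<in> A then f v else 0)"
    by (rule sum.cong) auto
  also have "\<dots> = sum f (W \<inter> A)" using sum.inter_restrict[OF assms(1), of f A] by simp
  also have "W \<inter> A = A" using assms by auto
  finally show ?thesis .
qed

lemma sum_delta_map:
  fixes g :: "'a \<Rightarrow> real"
  assumes "finite W" "\<forall>q\<in>P. m q \<in> W" "finite P"
  shows "(\<Sum>v\<in>W. g v * (\<Sum>q\<in>P. of_bool (m q = v) * h q)) = (\<Sum>q\<in>P. g (m q) * h q)"
proof -
  have "(\<Sum>v\<in>W. g v * (\<Sum>q\<in>P. of_bool (m q = v) * h q)) = (\<Sum>v\<in>W. \<Sum>q\<in>P. g v * (of_bool (m q = v) * h q))"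
    by (simp add: sum_distrib_left)
  also have "\<dots> = (\<Sum>q\<in>P. \<Sum>v\<in>W. g v * (of_bool (m q = v) * h q))"
    by (rule sum.swap)
  also have "\<dots> = (\<Sum>q\<in>P. g (m q) * h q)"
  proof (rule sum.cong)
    fix q assume q: "q \<in> P"
    have "(\<Sum>v\<in>W. g v * (of_bool (m q = v) * h q)) = (\<Sum>v\<in>W. if m q = v then g v * h q else 0)"
      by (rule sum.cong) auto
    also have "\<dots> = g (m q) * h q" using assms q by (simp add: sum.delta)
    finally show "(\<Sum>v\<in>W. g v * (of_bool (m q = v) * h q)) = g (m q) * h q" .
  qed simp
  finally show ?thesis .
qed

lemma transport_sum:
  fixes Pr :: "'a \<Rightarrow> real" and g :: "'a \<Rightarrow> real"
  assumes W: "finite W" and AW: "A \<subseteq> W" and BW: "B \<subseteq> W"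
    and m: "\<forall>q\<in>A\<times>B. m1 q \<in> W \<and> m2 q \<in> W"
  shows "(\<Sum>v\<in>W. g v * (Pr v - c * (of_bool (v\<in>A) * Pr v * sum Pr B) - c*(of_bool (v\<in>B) * Pr v * sum Pr A)
            + c*(\<Sum>q\<in>A\<times>B. of_bool (m1 q = v) * (Pr (fst q) * Pr (snd q)))
            + c*(\<Sum>q\<in>A\<times>B. of_bool (m2 q = v) * (Pr (fst q) * Pr (snd q)))))
       = (\<Sum>v\<in>W. g v * Pr v) + c * (\<Sum>q\<in>A\<times>B. (g (m1 q) + g (m2 q) - g (fst q) - g (snd q)) * (Pr (fst q) * Pr (snd q)))"
proof -
  have fA: "finite A" and fB: "finite B" using W AW BW finite_subset by auto
  let ?h = "\<lambda>q. Pr (fst q) * Pr (snd q)"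
  have e1: "(\<Sum>v\<in>W. g v * (of_bool (v\<in>A) * Pr v * sum Pr B)) = (\<Sum>q\<in>A\<times>B. g (fst q) * ?h q)"
  proof -
    have "(\<Sum>v\<in>W. g v * (of_bool (v\<in>A) * Pr v * sum Pr B)) = (\<Sum>v\<in>W. of_bool (v\<in>A) * (g v * Pr v * sum Pr B))"
      by (rule sum.cong) auto
    also have "\<dots> = (\<Sum>v\<in>A. g v * Pr v * sum Pr B)" by (rule sum_ofbool_subset[OF W AW])
    also have "\<dots> = (\<Sum>v\<in>A. \<Sum>u\<in>B. g v * Pr v * Pr u)" by (simp add: sum_distrib_left)
    also have "\<dots> = (\<Sum>q\<in>A\<times>B. g (fst q) * ?h q)"
      by (simp add: sum.cartesian_product mult.assoc case_prod_beta)
    finally show ?thesis .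
  qed
  have e2: "(\<Sum>v\<in>W. g v * (of_bool (v\<in>B) * Pr v * sum Pr A)) = (\<Sum>q\<in>A\<times>B. g (snd q) * ?h q)"
  proof -
    have "(\<Sum>v\<in>W. g v * (of_bool (v\<in>B) * Pr v * sum Pr A)) = (\<Sum>v\<in>W. of_bool (v\<in>B) * (g v * Pr v * sum Pr A))"
      by (rule sum.cong) auto
    also have "\<dots> = (\<Sum>v\<in>B. g v * Pr v * sum Pr A)" by (rule sum_ofbool_subset[OF W BW])
    also have "\<dots> = (\<Sum>v\<in>B. \<Sum>u\<in>A. g v * Pr v * Pr u)" by (simp add: sum_distrib_left)
    also have "\<dots> = (\<Sum>u\<in>A. \<Sum>v\<in>B. g v * Pr v * Pr u)" by (rule sum.swap)
    also have "\<dots> = (\<Sum>q\<in>A\<times>B. g (snd q) * ?h q)"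
      by (simp add: sum.cartesian_product mult.commute mult.left_commute case_prod_beta)
    finally show ?thesis .
  qed
  have fP: "finite (A\<times>B)" using fA fB by simp
  have e3: "(\<Sum>v\<in>W. g v * (\<Sum>q\<in>A\<times>B. of_bool (m1 q = v) * ?h q)) = (\<Sum>q\<in>A\<times>B. g (m1 q) * ?h q)"
    by (rule sum_delta_map[OF W _ fP]) (use m in auto)
  have e4: "(\<Sum>v\<in>W. g v * (\<Sum>q\<in>A\<times>B. of_bool (m2 q = v) * ?h q)) = (\<Sum>q\<in>A\<times>B. g (m2 q) * ?h q)"
    by (rule sum_delta_map[OF W _ fP]) (use m in auto)
  have "(\<Sum>v\<in>W. g v * (Pr v - c * (of_bool (v\<in>A) * Pr v * sum Pr B) - c*(of_bool (v\<in>B) * Pr v * sum Pr A)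
            + c*(\<Sum>q\<in>A\<times>B. of_bool (m1 q = v) * ?h q)
            + c*(\<Sum>q\<in>A\<times>B. of_bool (m2 q = v) * ?h q)))
       = (\<Sum>v\<in>W. g v * Pr v) - c * (\<Sum>v\<in>W. g v * (of_bool (v\<in>A) * Pr v * sum Pr B))
          - c * (\<Sum>v\<in>W. g v * (of_bool (v\<in>B) * Pr v * sum Pr A))
          + c * (\<Sum>v\<in>W. g v * (\<Sum>q\<in>A\<times>B. of_bool (m1 q = v) * ?h q))
          + c * (\<Sum>v\<in>W. g v * (\<Sum>q\<in>A\<times>B. of_bool (m2 q = v) * ?h q))"
    by (simp add: algebra_simps sum.distrib sum_subtractf sum_distrib_left)
  also have "\<dots> = (\<Sum>v\<in>W. g v * Pr v) + c * (\<Sum>q\<in>A\<times>B. (g (m1 q) + g (m2 q) - g (fst q) - g (snd q)) * ?h q)"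
    unfolding e1 e2 e3 e4
    by (simp add: algebra_simps sum.distrib sum_subtractf)
  finally show ?thesis .
qed


lemma violates_mono:
  assumes "violates w c" "w \<subseteq> w'" shows "violates w' c"
proof -
  obtain \<sigma> where s1: "\<forall>(R, ts) \<in> set (atoms c). (R, map (eval_trm \<sigma>) ts) \<in> w"
    and s2: "\<forall>(a, op, b) \<in> set (comps c). cmp op (eval_trm \<sigma> a) (eval_trm \<sigma> b)"
    using assms(1) unfolding violates_def by (elim exE conjE)
  have "\<forall>(R, ts) \<in> set (atoms c). (R, map (eval_trm \<sigma>) ts) \<in> w'"
  proof
    fix r assume "r \<in> set (atoms c)"
    hence "(fst r, map (eval_trm \<sigma>) (snd r)) \<in> w" using s1 by (cases r) auto
    hence "(fst r, map (eval_trm \<sigma>) (snd r)) \<in> w'" using assms(2) by (rule subsetD[rotated])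
    thus "case r of (R, ts) \<Rightarrow> (R, map (eval_trm \<sigma>) ts) \<in> w'" by (cases r) simp
  qed
  thus ?thesis unfolding violates_def using s2 by (intro exI[of _ \<sigma>] conjI)
qed

lemma violates_IC_mono:
  assumes "violates_IC w IC" "w \<subseteq> w'" shows "violates_IC w' IC"
proof -
  obtain c where "c \<in> IC" "violates w c" using assms(1) unfolding violates_IC_def by (elim bexE)
  thus ?thesis unfolding violates_IC_def using violates_mono[OF _ assms(2)] by (intro bexI)
qed

lemma viol_iff:
  assumes fin: "finite D" and wD: "w \<subseteq> D"
  shows "violates_IC w IC \<longleftrightarrow> (\<exists>X\<in>hyperedges D IC. X \<subseteq> w)"
proof
  assume v: "violates_IC w IC"
  let ?S = "{X. X \<subseteq> w \<and> forces_violation D IC X}"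
  have fw: "forces_violation D IC w" unfolding forces_violation_def
  proof (intro ballI impI)
    fix w' assume "w \<subseteq> w'" thus "violates_IC w' IC" using violates_IC_mono[OF v] by simp
  qed
  have wS: "w \<in> ?S" using fw by simp
  define k where "k = (LEAST j. j \<in> card ` ?S)"
  have cw: "card w \<in> card ` ?S" using wS by (rule imageI)
  have k1: "k \<in> card ` ?S" unfolding k_def by (rule LeastI[where P="\<lambda>j. j \<in> card ` ?S", OF cw])
  have k2: "\<forall>j \<in> card ` ?S. k \<le> j"
  proof
    fix j assume "j \<in> card ` ?S" thus "k \<le> j" unfolding k_def by (rule Least_le)
  qed
  note k = k1 k2
  from k1 obtain X where XS: "X \<in> ?S" and X3: "card X = k" by (rule imageE) simp
  have X: "X \<subseteq> w" "forces_violation D IC X" "card X = k" using XS X3 by simp_all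
  have finw: "finite w" using fin wD finite_subset by auto
  have "conflicting_set D IC X"
    unfolding conflicting_set_def
  proof (intro conjI allI impI)
    show "X \<subseteq> D" using X wD by auto
    show "forces_violation D IC X" by fact
    fix Y assume Y: "Y \<subset> X"
    show "\<not> forces_violation D IC Y"
    proof
      assume fY: "forces_violation D IC Y"
      have "finite X" using X finw finite_subset by auto
      hence "card Y < card X" using Y by (rule psubset_card_mono)
      moreover have "Y \<in> ?S" using fY Y X(1) by simp
      hence "card Y \<in> card ` ?S" by (rule imageI)
      hence "k \<le> card Y" by (rule bspec[OF k2])
      ultimately show False using X(3) by simp
    qed
  qed
  thus "\<exists>X\<in>hyperedges D IC. X \<subseteq> w" using X unfolding hyperedges_def by auto
next
  assume "\<exists>X\<in>hyperedges D IC. X \<subseteq> w"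
  then obtain X where "conflicting_set D IC X" "X \<subseteq> w" unfolding hyperedges_def by auto
  thus "violates_IC w IC" using wD unfolding conflicting_set_def forces_violation_def by auto
qed

definition PT :: "('a set \<Rightarrow> real) \<Rightarrow> 'a set \<Rightarrow> 'a set \<Rightarrow> real" where
  "PT Pr D X = (\<Sum>w\<in>{w\<in>Pow D. X \<subseteq> w}. Pr w)"

lemma sum_filter_ofbool:
  fixes f :: "'a \<Rightarrow> real"
  assumes "finite W"
  shows "(\<Sum>w\<in>{w\<in>W. P w}. f w) = (\<Sum>w\<in>W. of_bool (P w) * f w)"
proof -
  have "(\<Sum>w\<in>{w\<in>W. P w}. f w) = (\<Sum>w\<in>W. if P w then f w else 0)"
    using assms by (rule sum.inter_filter)
  also have "\<dots> = (\<Sum>w\<in>W. of_bool (P w) * f w)" by (rule sum.cong) auto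
  finally show ?thesis .
qed

lemma step:
  fixes D :: "('r, 'v::linorder) tuple set" and IC :: "('r, 'x, 'v) denial set"
  assumes model: "is_model D p IC Pr" and fin: "finite D"
    and tD: "t \<in> D" and tQ: "t \<notin> Q" and tC: "t \<in> C" and CQ: "C \<inter> Q = {}"
    and swap: "\<And>w w'. w \<subseteq> D \<Longrightarrow> w' \<subseteq> D \<Longrightarrow> \<not> violates_IC w IC \<Longrightarrow> \<not> violates_IC w' IC
        \<Longrightarrow> Q \<subseteq> w \<Longrightarrow> t \<in> w \<Longrightarrow> \<not> Q \<subseteq> w' \<Longrightarrow> t \<notin> w'
        \<Longrightarrow> \<not> violates_IC ((w - C) \<union> (w' \<inter> C)) IC \<and> \<not> violates_IC ((w' - C) \<union> (w \<inter> C)) IC"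
  shows "\<exists>Pr'. is_model D p IC Pr' \<and> PT Pr' D (insert t Q) = max 0 (PT Pr D Q + p t - 1)"
proof -
  define W where "W = Pow D"
  define A where "A = {w\<in>W. Q \<subseteq> w \<and> t \<in> w}"
  define B where "B = {w\<in>W. \<not> Q \<subseteq> w \<and> t \<notin> w}"
  define x where "x = sum Pr A"
  define y where "y = sum Pr B"
  define c where "c = min x y / (x * y)"
  define m1 where "m1 = (\<lambda>q::('r, 'v) tuple set \<times> ('r, 'v) tuple set. (fst q - C) \<union> (snd q \<inter> C))"
  define m2 where "m2 = (\<lambda>q::('r, 'v) tuple set \<times> ('r, 'v) tuple set. (snd q - C) \<union> (fst q \<inter> C))"
  define Pr' where "Pr' = (\<lambda>v. Pr v - c * (of_bool (v\<in>A) * Pr v * sum Pr B) - c*(of_bool (v\<in>B) * Pr v * sum Pr A)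
            + c*(\<Sum>q\<in>A\<times>B. of_bool (m1 q = v) * (Pr (fst q) * Pr (snd q)))
            + c*(\<Sum>q\<in>A\<times>B. of_bool (m2 q = v) * (Pr (fst q) * Pr (snd q))))"
  have finW: "finite W" unfolding W_def using fin by simp
  have AW: "A \<subseteq> W" and BW: "B \<subseteq> W" unfolding A_def B_def by auto
  have mW: "\<forall>q\<in>A\<times>B. m1 q \<in> W \<and> m2 q \<in> W" using AW BW unfolding m1_def m2_def W_def by auto
  have interp: "is_interpretation D p Pr" using model unfolding is_model_def by auto
  have nn: "\<And>w. w \<in> W \<Longrightarrow> 0 \<le> Pr w" using interp unfolding is_interpretation_def W_def by auto
  have tot: "(\<Sum>w\<in>W. Pr w) = 1" using interp unfolding is_interpretation_def W_def by auto
  have finP: "finite (Pow D)" using fin by simp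
  have marg: "\<And>s. s \<in> D \<Longrightarrow> (\<Sum>w\<in>W. of_bool (s \<in> w) * Pr w) = p s"
  proof -
    fix s assume s: "s \<in> D"
    have "(\<Sum>w\<in>{w\<in>Pow D. s \<in> w}. Pr w) = p s" using interp s unfolding is_interpretation_def by auto
    moreover have "(\<Sum>w\<in>{w\<in>Pow D. s \<in> w}. Pr w) = (\<Sum>w\<in>Pow D. of_bool (s \<in> w) * Pr w)"
      by (rule sum_filter_ofbool[OF finP])
    ultimately show "(\<Sum>w\<in>W. of_bool (s \<in> w) * Pr w) = p s" unfolding W_def by simp
  qed
  have zero: "\<And>w. w \<in> W \<Longrightarrow> violates_IC w IC \<Longrightarrow> Pr w = 0"
    using model unfolding is_model_def W_def by auto
  have x0: "0 \<le> x" unfolding x_def using AW nn by (auto intro: sum_nonneg)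
  have y0: "0 \<le> y" unfolding y_def using BW nn by (auto intro: sum_nonneg)
  have c0: "0 \<le> c" unfolding c_def using x0 y0 by simp
  have cy: "c * y \<le> 1" and cx: "c * x \<le> 1" and cxy: "c * (x * y) = min x y"
  proof -
    have "(c * y \<le> 1 \<and> c * x \<le> 1) \<and> c * (x * y) = min x y"
    proof (cases "x = 0 \<or> y = 0")
      case True
      then show ?thesis unfolding c_def using x0 y0 by auto
    next
      case False
      hence xp: "x > 0" "y > 0" using x0 y0 by auto
      have "c * y = min x y / x" unfolding c_def using xp by (simp add: field_simps)
      moreover have "c * x = min x y / y" unfolding c_def using xp by (simp add: field_simps)
      moreover have "min x y / x \<le> 1" "min x y / y \<le> 1" using xp by (auto simp: divide_le_eq_1)
      ultimately show ?thesis unfolding c_def using xp by auto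
    qed
    thus "c * y \<le> 1" "c * x \<le> 1" "c * (x * y) = min x y" by auto
  qed
  have key: "\<And>g. (\<Sum>v\<in>W. g v * Pr' v) = (\<Sum>v\<in>W. g v * Pr v)
      + c * (\<Sum>q\<in>A\<times>B. (g (m1 q) + g (m2 q) - g (fst q) - g (snd q)) * (Pr (fst q) * Pr (snd q)))"
    unfolding Pr'_def by (rule transport_sum[OF finW AW BW mW])
  have fAB: "finite (A \<times> B)" using finW AW BW finite_subset by (meson finite_SigmaI)
  have hnn: "\<And>q. q \<in> A \<times> B \<Longrightarrow> 0 \<le> Pr (fst q) * Pr (snd q)"
  proof -
    fix q assume "q \<in> A \<times> B"
    hence "fst q \<in> W" "snd q \<in> W" using AW BW by auto
    thus "0 \<le> Pr (fst q) * Pr (snd q)" using nn by simp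
  qed
  have AB: "A \<inter> B = {}" unfolding A_def B_def by auto
  have nn': "\<And>v. v \<in> W \<Longrightarrow> 0 \<le> Pr' v"
  proof -
    fix v assume v: "v \<in> W"
    have base: "0 \<le> Pr v - c * (of_bool (v\<in>A) * Pr v * sum Pr B) - c*(of_bool (v\<in>B) * Pr v * sum Pr A)"
    proof (cases "v \<in> A")
      case True
      hence "v \<notin> B" using AB by auto
      moreover have "c * (Pr v * y) \<le> Pr v"
      proof -
        have "(c * y) * Pr v \<le> 1 * Pr v" by (rule mult_right_mono[OF cy nn[OF v]])
        thus ?thesis by (simp add: algebra_simps)
      qed
      ultimately show ?thesis using True unfolding x_def y_def by simp
    next
      case False
      have "c * (Pr v * x) \<le> Pr v"
      proof -
        have "(c * x) * Pr v \<le> 1 * Pr v" by (rule mult_right_mono[OF cx nn[OF v]])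
        thus ?thesis by (simp add: algebra_simps)
      qed
      thus ?thesis using False nn[OF v] unfolding x_def y_def by simp
    qed
    have s1: "0 \<le> (\<Sum>q\<in>A\<times>B. of_bool (m1 q = v) * (Pr (fst q) * Pr (snd q)))"
      by (rule sum_nonneg) (use hnn in auto)
    have s2: "0 \<le> (\<Sum>q\<in>A\<times>B. of_bool (m2 q = v) * (Pr (fst q) * Pr (snd q)))"
      by (rule sum_nonneg) (use hnn in auto)
    show "0 \<le> Pr' v" unfolding Pr'_def using base s1 s2 c0 by simp
  qed
  have valid_pair: "\<And>q. q \<in> A \<times> B \<Longrightarrow> Pr (fst q) * Pr (snd q) \<noteq> 0 \<Longrightarrow>
       \<not> violates_IC (m1 q) IC \<and> \<not> violates_IC (m2 q) IC"
  proof -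
    fix q assume q: "q \<in> A \<times> B" and h: "Pr (fst q) * Pr (snd q) \<noteq> 0"
    have a: "fst q \<in> A" and b: "snd q \<in> B" using q by auto
    have "\<not> violates_IC (fst q) IC" using zero a AW h by auto
    moreover have "\<not> violates_IC (snd q) IC" using zero b BW h by auto
    ultimately show "\<not> violates_IC (m1 q) IC \<and> \<not> violates_IC (m2 q) IC"
      unfolding m1_def m2_def
      using swap[of "fst q" "snd q"] a b unfolding A_def B_def W_def by auto
  qed
  have viol': "\<And>v. v \<in> W \<Longrightarrow> violates_IC v IC \<Longrightarrow> Pr' v = 0"
  proof -
    fix v assume v: "v \<in> W" and vv: "violates_IC v IC"
    have s1: "(\<Sum>q\<in>A\<times>B. of_bool (m1 q = v) * (Pr (fst q) * Pr (snd q))) = 0"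
      by (rule sum.neutral) (use valid_pair vv in fastforce)
    have s2: "(\<Sum>q\<in>A\<times>B. of_bool (m2 q = v) * (Pr (fst q) * Pr (snd q))) = 0"
      by (rule sum.neutral) (use valid_pair vv in fastforce)
    show "Pr' v = 0" unfolding Pr'_def using s1 s2 zero[OF v vv] by simp
  qed
  have tot': "(\<Sum>v\<in>W. Pr' v) = 1"
    using key[of "\<lambda>_. 1"] tot by simp
  have marg': "\<And>s. s \<in> D \<Longrightarrow> (\<Sum>v\<in>W. of_bool (s \<in> v) * Pr' v) = p s"
  proof -
    fix s assume s: "s \<in> D"
    have "(\<Sum>q\<in>A\<times>B. (of_bool (s \<in> m1 q) + of_bool (s \<in> m2 q) - of_bool (s \<in> fst q) - of_bool (s \<in> snd q)) * (Pr (fst q) * Pr (snd q))) = (0::real)"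
      by (rule sum.neutral) (auto simp: m1_def m2_def)
    thus "(\<Sum>v\<in>W. of_bool (s \<in> v) * Pr' v) = p s"
      using key[of "\<lambda>v. of_bool (s \<in> v)"] marg[OF s] by simp
  qed
  have model': "is_model D p IC Pr'"
    unfolding is_model_def is_interpretation_def
  proof (intro conjI ballI impI)
    fix w assume "w \<in> Pow D" thus "0 \<le> Pr' w" using nn' unfolding W_def by simp
  next
    show "(\<Sum>w\<in>Pow D. Pr' w) = 1" using tot' unfolding W_def .
  next
    fix s assume s: "s \<in> D"
    have "(\<Sum>w\<in>{w\<in>Pow D. s \<in> w}. Pr' w) = (\<Sum>w\<in>Pow D. of_bool (s \<in> w) * Pr' w)"
      by (rule sum_filter_ofbool[OF finP])
    thus "(\<Sum>w\<in>{w\<in>Pow D. s \<in> w}. Pr' w) = p s" using marg'[OF s] unfolding W_def by simp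
  next
    fix w assume "w \<in> Pow D" "violates_IC w IC" thus "Pr' w = 0" using viol' unfolding W_def by simp
  qed
  have PTx: "PT Pr D (insert t Q) = x"
  proof -
    have "{w\<in>Pow D. insert t Q \<subseteq> w} = A" unfolding A_def W_def by auto
    thus ?thesis unfolding PT_def x_def by simp
  qed
  have PT': "PT Pr' D (insert t Q) = x - min x y"
  proof -
    have "(\<Sum>q\<in>A\<times>B. (of_bool (insert t Q \<subseteq> m1 q) + of_bool (insert t Q \<subseteq> m2 q)
          - of_bool (insert t Q \<subseteq> fst q) - of_bool (insert t Q \<subseteq> snd q)) * (Pr (fst q) * Pr (snd q)))
        = (\<Sum>q\<in>A\<times>B. (-1) * (Pr (fst q) * Pr (snd q)))"
    proof (rule sum.cong)
      fix q assume q: "q \<in> A \<times> B"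
      have a: "Q \<subseteq> fst q" "t \<in> fst q" and b: "\<not> Q \<subseteq> snd q" "t \<notin> snd q"
        using q unfolding A_def B_def by auto
      have "\<not> insert t Q \<subseteq> m1 q" using b tC unfolding m1_def by auto
      moreover have "\<not> insert t Q \<subseteq> m2 q" using b CQ unfolding m2_def by auto
      moreover have "insert t Q \<subseteq> fst q" "\<not> insert t Q \<subseteq> snd q" using a b by auto
      ultimately have z: "of_bool (insert t Q \<subseteq> m1 q) = (0::real)" "of_bool (insert t Q \<subseteq> m2 q) = (0::real)"
        "of_bool (insert t Q \<subseteq> fst q) = (1::real)" "of_bool (insert t Q \<subseteq> snd q) = (0::real)"
        by (simp_all only: of_bool_eq_0_iff of_bool_eq_1_iff not_False_eq_True)
      have "(of_bool (insert t Q \<subseteq> m1 q) + of_bool (insert t Q \<subseteq> m2 q)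
          - of_bool (insert t Q \<subseteq> fst q) - of_bool (insert t Q \<subseteq> snd q)) = (-1::real)"
        unfolding z by simp
      thus "(of_bool (insert t Q \<subseteq> m1 q) + of_bool (insert t Q \<subseteq> m2 q)
          - of_bool (insert t Q \<subseteq> fst q) - of_bool (insert t Q \<subseteq> snd q)) * (Pr (fst q) * Pr (snd q))
          = (-1) * (Pr (fst q) * Pr (snd q))" by (simp only:)
    qed simp
    also have "\<dots> = - (x * y)"
      unfolding x_def y_def by (simp add: sum.cartesian_product sum_product sum_negf case_prod_beta)
    finally have e: "(\<Sum>q\<in>A\<times>B. (of_bool (insert t Q \<subseteq> m1 q) + of_bool (insert t Q \<subseteq> m2 q)
          - of_bool (insert t Q \<subseteq> fst q) - of_bool (insert t Q \<subseteq> snd q)) * (Pr (fst q) * Pr (snd q))) = - (x * y)" .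
    have "PT Pr' D (insert t Q) = (\<Sum>v\<in>W. of_bool (insert t Q \<subseteq> v) * Pr' v)"
      unfolding PT_def W_def by (rule sum_filter_ofbool[OF finP])
    also have "\<dots> = (\<Sum>v\<in>W. of_bool (insert t Q \<subseteq> v) * Pr v) - c * (x * y)"
      using key[of "\<lambda>v. of_bool (insert t Q \<subseteq> v)"] e by simp
    also have "(\<Sum>v\<in>W. of_bool (insert t Q \<subseteq> v) * Pr v) = x"
      using PTx sum_filter_ofbool[OF finP, where P="\<lambda>v. insert t Q \<subseteq> v" and f=Pr] unfolding PT_def W_def by simp
    finally show ?thesis using cxy by simp
  qed
  have xy: "x - y = PT Pr D Q + p t - 1"
  proof -
    have "PT Pr D Q = (\<Sum>v\<in>W. of_bool (Q \<subseteq> v) * Pr v)"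
      unfolding PT_def W_def by (rule sum_filter_ofbool[OF finP])
    moreover have "x = (\<Sum>v\<in>W. of_bool (Q \<subseteq> v \<and> t \<in> v) * Pr v)"
      unfolding x_def A_def by (rule sum_filter_ofbool[OF finW])
    moreover have "y = (\<Sum>v\<in>W. of_bool (\<not> Q \<subseteq> v \<and> t \<notin> v) * Pr v)"
      unfolding y_def B_def by (rule sum_filter_ofbool[OF finW])
    moreover have "(\<Sum>v\<in>W. of_bool (Q \<subseteq> v) * Pr v) + (\<Sum>v\<in>W. of_bool (t \<in> v) * Pr v)
        - (\<Sum>v\<in>W. of_bool (Q \<subseteq> v \<and> t \<in> v) * Pr v) = (\<Sum>v\<in>W. Pr v) - (\<Sum>v\<in>W. of_bool (\<not> Q \<subseteq> v \<and> t \<notin> v) * Pr v)"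
    proof -
      have "(\<Sum>v\<in>W. of_bool (Q \<subseteq> v) * Pr v) + (\<Sum>v\<in>W. of_bool (t \<in> v) * Pr v)
        - (\<Sum>v\<in>W. of_bool (Q \<subseteq> v \<and> t \<in> v) * Pr v) = (\<Sum>v\<in>W. (of_bool (Q \<subseteq> v) + of_bool (t \<in> v) - of_bool (Q \<subseteq> v \<and> t \<in> v)) * Pr v)"
        by (simp add: sum.distrib sum_subtractf algebra_simps)
      also have "\<dots> = (\<Sum>v\<in>W. (1 - of_bool (\<not> Q \<subseteq> v \<and> t \<notin> v)) * Pr v)"
        by (rule sum.cong) auto
      also have "\<dots> = (\<Sum>v\<in>W. Pr v) - (\<Sum>v\<in>W. of_bool (\<not> Q \<subseteq> v \<and> t \<notin> v) * Pr v)"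
        by (simp add: sum_subtractf algebra_simps)
      finally show ?thesis .
    qed
    ultimately show ?thesis using tot marg[OF tD] by linarith
  qed
  have "PT Pr' D (insert t Q) = max 0 (PT Pr D Q + p t - 1)"
    using PT' xy by (simp add: min_def max_def)
  with model' show ?thesis by (intro exI[of _ Pr'] conjI)
qed


lemma frechet:
  fixes D :: "('r, 'v::linorder) tuple set" and IC :: "('r, 'x, 'v) denial set"
  assumes model: "is_model D p IC Pr" and fin: "finite D" and SD: "S \<subseteq> D"
  shows "(\<Sum>t\<in>S. p t) - real (card S) + 1 \<le> PT Pr D S"
proof -
  have interp: "is_interpretation D p Pr" using model unfolding is_model_def by auto
  have nn: "\<And>w. w \<in> Pow D \<Longrightarrow> 0 \<le> Pr w" using interp unfolding is_interpretation_def by auto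
  have tot: "(\<Sum>w\<in>Pow D. Pr w) = 1" using interp unfolding is_interpretation_def by auto
  have marg: "\<And>s. s \<in> D \<Longrightarrow> (\<Sum>w\<in>{w\<in>Pow D. s \<in> w}. Pr w) = p s"
    using interp unfolding is_interpretation_def by auto
  have finS: "finite S" using fin SD finite_subset by auto
  from finS SD show ?thesis
  proof (induction S rule: finite_induct)
    case empty
    then show ?case unfolding PT_def using tot by (simp add: Pow_def)
  next
    case (insert t S)
    have IH: "(\<Sum>t\<in>S. p t) - real (card S) + 1 \<le> PT Pr D S" using insert by auto
    have tD: "t \<in> D" using insert by auto
    let ?X1 = "{w\<in>Pow D. S \<subseteq> w}" and ?X2 = "{w\<in>Pow D. t \<in> w}"
    have fX: "finite ?X1" "finite ?X2" using fin by auto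
    have u: "sum Pr (?X1 \<union> ?X2) + sum Pr (?X1 \<inter> ?X2) = sum Pr ?X1 + sum Pr ?X2"
      by (rule sum.union_inter[OF fX])
    have e: "?X1 \<inter> ?X2 = {w\<in>Pow D. insert t S \<subseteq> w}" by auto
    have le1: "sum Pr (?X1 \<union> ?X2) \<le> 1"
    proof -
      have "sum Pr (?X1 \<union> ?X2) \<le> sum Pr (Pow D)"
        by (rule sum_mono2) (use fin nn in auto)
      thus ?thesis using tot by simp
    qed
    have "sum Pr ?X1 + sum Pr ?X2 - 1 \<le> sum Pr (?X1 \<inter> ?X2)" using u le1 by linarith
    hence "PT Pr D S + p t - 1 \<le> PT Pr D (insert t S)"
      unfolding PT_def e marg[OF tD] .
    moreover have "(\<Sum>t\<in>insert t S. p t) = p t + (\<Sum>t\<in>S. p t)" using insert by simp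
    moreover have "card (insert t S) = Suc (card S)" using insert by simp
    ultimately show ?case using IH by simp
  qed
qed

lemma PT_nonneg:
  assumes "is_model D p IC Pr" shows "0 \<le> PT Pr D S"
  using assms unfolding is_model_def is_interpretation_def PT_def by (auto intro: sum_nonneg)

lemma connected_extend:
  assumes c: "connected_in E t s" and sX: "s \<in> X" and XE: "X \<in> E" and uX: "u \<in> X"
  shows "connected_in E t u"
proof -
  obtain es where es: "es \<noteq> []" "distinct es" "set es \<subseteq> E"
    "\<forall>i. Suc i < length es \<longrightarrow> es ! i \<inter> es ! Suc i \<noteq> {}" "t \<in> hd es" "s \<in> last es"
    using c unfolding connected_in_def by blast
  show ?thesis
  proof (cases "X \<in> set es")
    case True
    then obtain i where i: "i < length es" "es ! i = X" by (auto simp: in_set_conv_nth)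
    let ?es = "take (Suc i) es"
    have "?es \<noteq> []" using es(1) by simp
    moreover have "distinct ?es" using es(2) by simp
    moreover have "set ?es \<subseteq> E" using es(3) set_take_subset by fastforce
    moreover have "\<forall>j. Suc j < length ?es \<longrightarrow> ?es ! j \<inter> ?es ! Suc j \<noteq> {}" using es(4) by auto
    moreover have "t \<in> hd ?es" using es(1,5) by (simp add: hd_take)
    moreover have "last ?es = es ! i" using i by (simp add: take_Suc_conv_app_nth)
    hence "u \<in> last ?es" using i uX by simp
    ultimately show ?thesis unfolding connected_in_def by blast
  next
    case False
    let ?es = "es @ [X]"
    have "?es \<noteq> []" by simp
    moreover have "distinct ?es" using es(2) False by simp
    moreover have "set ?es \<subseteq> E" using es(3) XE by simp
    moreover have "\<forall>j. Suc j < length ?es \<longrightarrow> ?es ! j \<inter> ?es ! Suc j \<noteq> {}"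
    proof (intro allI impI)
      fix j assume j: "Suc j < length ?es"
      show "?es ! j \<inter> ?es ! Suc j \<noteq> {}"
      proof (cases "Suc j < length es")
        case True thus ?thesis using es(4) j by (simp add: nth_append)
      next
        case False
        hence jj: "j = length es - 1" using j by simp
        hence "?es ! j = last es" "?es ! Suc j = X" using es(1)
          by (auto simp: nth_append last_conv_nth)
        thus ?thesis using es(6) sX by auto
      qed
    qed
    moreover have "t \<in> hd ?es" using es(1,5) by simp
    moreover have "u \<in> last ?es" using uX by simp
    ultimately show ?thesis unfolding connected_in_def by blast
  qed
qed

lemma component_closed:
  assumes XE: "X \<in> E" and sX: "s \<in> X" and sC: "s \<in> insert t {s. connected_in E t s}"
  shows "X \<subseteq> insert t {s. connected_in E t s}"
proof
  fix u assume uX: "u \<in> X"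
  show "u \<in> insert t {s. connected_in E t s}"
  proof (cases "s = t")
    case True
    have "connected_in E t u" unfolding connected_in_def
      by (rule exI[of _ "[X]"]) (use XE sX uX True in auto)
    thus ?thesis by simp
  next
    case False
    hence "connected_in E t s" using sC by simp
    thus ?thesis using connected_extend XE sX uX by fastforce
  qed
qed

lemma matr_sub:
  assumes "matryoshka (Int_sets T H)" "S \<subseteq> T"
  shows "matryoshka (Int_sets S H)"
  unfolding matryoshka_def Int_sets_def
proof (intro ballI impI)
  fix A B assume A: "A \<in> {S \<inter> e |e. e \<in> H}" and B: "B \<in> {S \<inter> e |e. e \<in> H}" and AB: "A \<noteq> B"
  obtain e1 e2 where e: "A = S \<inter> e1" "B = S \<inter> e2" "e1 \<in> H" "e2 \<in> H" using A B by auto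
  have "T \<inter> e1 \<noteq> T \<inter> e2" using AB e assms(2) by blast
  moreover have "T \<inter> e1 \<in> Int_sets T H" "T \<inter> e2 \<in> Int_sets T H"
    using e unfolding Int_sets_def by auto
  ultimately have "T \<inter> e1 \<subset> T \<inter> e2 \<or> T \<inter> e2 \<subset> T \<inter> e1"
    using assms(1)[unfolded matryoshka_def, rule_format] by simp
  hence "A \<subseteq> B \<or> B \<subseteq> A" using e assms(2) by blast
  thus "A \<subset> B \<or> B \<subset> A" using AB by blast
qed

lemma matr_choose:
  assumes fH: "finite H" and fS: "finite S" and ne: "S \<noteq> {}"
    and m: "matryoshka (Int_sets S H)"
  shows "\<exists>t\<in>S. \<forall>E\<in>H. t \<in> E \<longrightarrow> S \<subseteq> E"
proof -
  define f where "f = (\<lambda>t. card {E\<in>H. t \<in> E})"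
  have "Min (f ` S) \<in> f ` S" using fS ne by (intro Min_in) auto
  then obtain t where t: "t \<in> S" "f t = Min (f ` S)" by auto
  have tmin: "\<And>s. s \<in> S \<Longrightarrow> f t \<le> f s" using t fS by simp
  show ?thesis
  proof (rule bexI[OF _ t(1)], intro ballI impI)
    fix E assume E: "E \<in> H" and tE: "t \<in> E"
    show "S \<subseteq> E"
    proof (rule ccontr)
      assume "\<not> S \<subseteq> E"
      then obtain s where s: "s \<in> S" "s \<notin> E" by auto
      have sub: "{E'\<in>H. s \<in> E'} \<subseteq> {E'\<in>H. t \<in> E'}"
      proof
        fix E' assume E': "E' \<in> {E'\<in>H. s \<in> E'}"
        have ne': "S \<inter> E' \<noteq> S \<inter> E" using E' s by auto
        have i1: "S \<inter> E' \<in> Int_sets S H" "S \<inter> E \<in> Int_sets S H"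
          using E E' unfolding Int_sets_def by auto
        have "S \<inter> E' \<subset> S \<inter> E \<or> S \<inter> E \<subset> S \<inter> E'"
          using m[unfolded matryoshka_def, rule_format, OF i1 ne'] .
        hence "S \<inter> E \<subset> S \<inter> E'" using E' s by auto
        thus "E' \<in> {E'\<in>H. t \<in> E'}" using tE t(1) E' by auto
      qed
      have "E \<in> {E'\<in>H. t \<in> E'}" "E \<notin> {E'\<in>H. s \<in> E'}" using E tE s by auto
      hence "{E'\<in>H. s \<in> E'} \<subset> {E'\<in>H. t \<in> E'}" using sub by blast
      hence "f s < f t" unfolding f_def by (rule psubset_card_mono[rotated]) (use fH in auto)
      thus False using tmin[OF s(1)] by simp
    qed
  qed
qed


lemma hyperedges_finite: "finite D \<Longrightarrow> finite (hyperedges D IC)"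
  unfolding hyperedges_def conflicting_set_def
  by (rule finite_subset[of _ "Pow D"]) auto

lemma construct:
  fixes D :: "('r, 'v::linorder) tuple set" and IC :: "('r, 'x, 'v) denial set"
  assumes fin: "finite D" and cons: "consistent D p IC" and pdb: "pdb D p"
  shows "S \<subseteq> D \<Longrightarrow> ((\<forall>t \<in> S. \<forall>t' \<in> S. t \<noteq> t' \<longrightarrow> disconnected_in (hyperedges D IC) t t')
            \<or> matryoshka (Int_sets S (hyperedges D IC)))
     \<Longrightarrow> \<exists>Pr. is_model D p IC Pr \<and> PT Pr D S = max 0 ((\<Sum>t \<in> S. p t) - real (card S) + 1)"
proof (induction "card S" arbitrary: S rule: less_induct)
  case less
  let ?H = "hyperedges D IC"
  have finS: "finite S" using less.prems fin finite_subset by auto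
  show ?case
  proof (cases "S = {}")
    case True
    obtain Pr where Pr: "is_model D p IC Pr" using cons unfolding consistent_def by auto
    have "PT Pr D S = 1" using Pr True unfolding PT_def is_model_def is_interpretation_def by (simp add: Pow_def)
    thus ?thesis using Pr True by auto
  next
    case False
    obtain t C where tS: "t \<in> S" and tC: "t \<in> C" and CQ: "C \<inter> (S - {t}) = {}"
      and swap: "\<And>w w'. w \<subseteq> D \<Longrightarrow> w' \<subseteq> D \<Longrightarrow> \<not> violates_IC w IC \<Longrightarrow> \<not> violates_IC w' IC
        \<Longrightarrow> S - {t} \<subseteq> w \<Longrightarrow> t \<in> w \<Longrightarrow> \<not> S - {t} \<subseteq> w' \<Longrightarrow> t \<notin> w'
        \<Longrightarrow> \<not> violates_IC ((w - C) \<union> (w' \<inter> C)) IC \<and> \<not> violates_IC ((w' - C) \<union> (w \<inter> C)) IC"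
      and good: "((\<forall>u \<in> S - {t}. \<forall>u' \<in> S - {t}. u \<noteq> u' \<longrightarrow> disconnected_in ?H u u')
            \<or> matryoshka (Int_sets (S - {t}) ?H))"
    proof (cases "\<forall>t \<in> S. \<forall>t' \<in> S. t \<noteq> t' \<longrightarrow> disconnected_in ?H t t'")
      case True
      obtain t where tS: "t \<in> S" using False by auto
      define C where "C = insert t {s. connected_in ?H t s}"
      have cl: "\<And>X s. X \<in> ?H \<Longrightarrow> s \<in> X \<Longrightarrow> s \<in> C \<Longrightarrow> X \<subseteq> C"
        unfolding C_def by (rule component_closed)
      have mixok: "\<not> violates_IC ((w - C) \<union> (w' \<inter> C)) IC"
        if w: "w \<subseteq> D" "\<not> violates_IC w IC" and w': "w' \<subseteq> D" "\<not> violates_IC w' IC" for w w'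
      proof
        assume "violates_IC ((w - C) \<union> (w' \<inter> C)) IC"
        then obtain X where X: "X \<in> ?H" "X \<subseteq> (w - C) \<union> (w' \<inter> C)"
          using viol_iff[OF fin, of "(w - C) \<union> (w' \<inter> C)" IC] w w' by auto
        show False
        proof (cases "X \<inter> C = {}")
          case True
          hence "X \<subseteq> w" using X by auto
          thus False using viol_iff[OF fin w(1)] w(2) X by auto
        next
          case False
          then obtain s where "s \<in> X" "s \<in> C" by auto
          hence "X \<subseteq> C" using cl X by auto
          hence "X \<subseteq> w'" using X by auto
          thus False using viol_iff[OF fin w'(1)] w'(2) X by auto
        qed
      qed
      show ?thesis
      proof (rule that[of t C])
        show "t \<in> S" "t \<in> C" by (fact tS) (simp add: C_def)
        show "C \<inter> (S - {t}) = {}"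
          using True tS unfolding C_def disconnected_in_def by auto
        show "\<And>w w'. w \<subseteq> D \<Longrightarrow> w' \<subseteq> D \<Longrightarrow> \<not> violates_IC w IC \<Longrightarrow> \<not> violates_IC w' IC
          \<Longrightarrow> S - {t} \<subseteq> w \<Longrightarrow> t \<in> w \<Longrightarrow> \<not> S - {t} \<subseteq> w' \<Longrightarrow> t \<notin> w'
          \<Longrightarrow> \<not> violates_IC ((w - C) \<union> (w' \<inter> C)) IC \<and> \<not> violates_IC ((w' - C) \<union> (w \<inter> C)) IC"
          using mixok by blast
        show "((\<forall>u \<in> S - {t}. \<forall>u' \<in> S - {t}. u \<noteq> u' \<longrightarrow> disconnected_in ?H u u')
            \<or> matryoshka (Int_sets (S - {t}) ?H))" using True by blast
      qed
    next
      case nd: False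
      hence m: "matryoshka (Int_sets S ?H)" using less.prems by blast
      obtain t where tS: "t \<in> S" and tE: "\<forall>E\<in>?H. t \<in> E \<longrightarrow> S \<subseteq> E"
        using matr_choose[OF hyperedges_finite[OF fin] finS False m] by blast
      show ?thesis
      proof (rule that[of t "{t}"])
        show "t \<in> S" "t \<in> {t}" "{t} \<inter> (S - {t}) = {}" using tS by auto
        show "((\<forall>u \<in> S - {t}. \<forall>u' \<in> S - {t}. u \<noteq> u' \<longrightarrow> disconnected_in ?H u u')
            \<or> matryoshka (Int_sets (S - {t}) ?H))" using matr_sub[OF m] by blast
        fix w w' assume w: "w \<subseteq> D" "\<not> violates_IC w IC" and w': "w' \<subseteq> D" "\<not> violates_IC w' IC"
          and Q: "\<not> S - {t} \<subseteq> w'" and tw: "t \<in> w" and tw': "t \<notin> w'"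
        have 1: "(w - {t}) \<union> (w' \<inter> {t}) \<subseteq> w" using tw by auto
        have "\<not> violates_IC ((w - {t}) \<union> (w' \<inter> {t})) IC"
          using violates_IC_mono[OF _ 1] w(2) by blast
        moreover have "\<not> violates_IC ((w' - {t}) \<union> (w \<inter> {t})) IC"
        proof
          assume "violates_IC ((w' - {t}) \<union> (w \<inter> {t})) IC"
          moreover have "(w' - {t}) \<union> (w \<inter> {t}) \<subseteq> D" using w w' by auto
          ultimately obtain X where X: "X \<in> ?H" "X \<subseteq> (w' - {t}) \<union> (w \<inter> {t})"
            using viol_iff[OF fin] by blast
          show False
          proof (cases "t \<in> X")
            case True
            hence "S \<subseteq> X" using tE X by auto
            hence "S - {t} \<subseteq> w'" using X by auto
            thus False using Q by simp
          next
            case False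
            hence "X \<subseteq> w'" using X by auto
            thus False using viol_iff[OF fin w'(1)] w'(2) X by auto
          qed
        qed
        ultimately show "\<not> violates_IC ((w - {t}) \<union> (w' \<inter> {t})) IC \<and> \<not> violates_IC ((w' - {t}) \<union> (w \<inter> {t})) IC"
          by blast
      qed
    qed
    let ?Q = "S - {t}"
    have cardQ: "card ?Q < card S" using tS finS by (meson card_Diff1_less)
    obtain Pr where Pr: "is_model D p IC Pr" and PrQ: "PT Pr D ?Q = max 0 ((\<Sum>t \<in> ?Q. p t) - real (card ?Q) + 1)"
    proof -
      have "?Q \<subseteq> D" using less.prems(1) by blast
      from less.hyps[OF cardQ this good] show ?thesis using that by blast
    qed
    have tD: "t \<in> D" using tS less.prems by auto
    obtain Pr' where Pr': "is_model D p IC Pr'" and v: "PT Pr' D (insert t ?Q) = max 0 (PT Pr D ?Q + p t - 1)"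
    proof -
      have tnQ: "t \<notin> ?Q" by simp
      show ?thesis using step[OF Pr fin tD tnQ tC CQ swap] that by blast
    qed
    have ins: "insert t ?Q = S" using tS by auto
    have sumS: "(\<Sum>t \<in> S. p t) = p t + (\<Sum>t \<in> ?Q. p t)" using tS finS by (simp add: sum.remove)
    have cS: "real (card S) = real (card ?Q) + 1"
    proof -
      have "card ?Q = card S - 1" using tS finS by (simp add: card_Diff_singleton)
      moreover have "card S > 0" using tS finS by (auto simp: card_gt_0_iff)
      ultimately show ?thesis by simp
    qed
    have pt1: "p t \<le> 1" using pdb tD unfolding pdb_def by auto
    have "PT Pr' D S = max 0 ((\<Sum>t \<in> S. p t) - real (card S) + 1)"
    proof -
      have "PT Pr' D S = max 0 (max 0 ((\<Sum>t \<in> ?Q. p t) - real (card ?Q) + 1) + p t - 1)"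
        using v PrQ unfolding ins by simp
      also have "\<dots> = max 0 ((\<Sum>t \<in> ?Q. p t) + p t - real (card ?Q))"
        using pt1 by (simp add: max_def)
      also have "\<dots> = max 0 ((\<Sum>t \<in> S. p t) - real (card S) + 1)"
        unfolding sumS cS by (simp add: algebra_simps)
      finally show ?thesis .
    qed
    with Pr' show ?thesis by (intro exI[of _ Pr'] conjI)
  qed
qed

theorem lemma1:
  fixes D :: "('r, 'v::linorder) tuple set"
    and p :: "('r, 'v) tuple \<Rightarrow> real"
    and IC :: "('r, 'x, 'v) denial set"
    and T :: "('r, 'v) tuple set"
  assumes "pdb D p"
    and "finite IC"
    and "consistent D p IC"
    and "T \<subseteq> D"
  shows "(((\<forall>t \<in> T. \<forall>t' \<in> T. t \<noteq> t' \<longrightarrow> disconnected_in (hyperedges D IC) t t')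
            \<or> matryoshka (Int_sets T (hyperedges D IC)))
          \<longrightarrow> p_min D p IC T = max 0 ((\<Sum>t \<in> T. p t) - real (card T) + 1))
       \<and> (\<not> ((\<forall>t \<in> T. \<forall>t' \<in> T. t \<noteq> t' \<longrightarrow> disconnected_in (hyperedges D IC) t t')
            \<or> matryoshka (Int_sets T (hyperedges D IC)))
          \<longrightarrow> max 0 ((\<Sum>t \<in> T. p t) - real (card T) + 1) \<le> p_min D p IC T)"
proof -
  have fin: "finite D" using assms(1) unfolding pdb_def by auto
  let ?L = "max 0 ((\<Sum>t \<in> T. p t) - real (card T) + 1)"
  let ?M = "{(\<Sum>w \<in> {w \<in> Pow D. T \<subseteq> w}. Pr w) | Pr. is_model D p IC Pr}"
  have pm: "p_min D p IC T = Inf ?M" unfolding p_min_def by simp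
  have ne: "?M \<noteq> {}" using assms(3) unfolding consistent_def by auto
  have lb: "\<And>y. y \<in> ?M \<Longrightarrow> ?L \<le> y"
  proof -
    fix y assume "y \<in> ?M"
    then obtain Pr where Pr: "is_model D p IC Pr" "y = PT Pr D T" unfolding PT_def by auto
    show "?L \<le> y" using frechet[OF Pr(1) fin assms(4)] PT_nonneg[OF Pr(1)] Pr(2) by simp
  qed
  have low: "?L \<le> p_min D p IC T" unfolding pm by (rule cInf_greatest[OF ne lb])
  have eq: "p_min D p IC T = ?L"
    if g: "(\<forall>t \<in> T. \<forall>t' \<in> T. t \<noteq> t' \<longrightarrow> disconnected_in (hyperedges D IC) t t')
            \<or> matryoshka (Int_sets T (hyperedges D IC))"
  proof -
    obtain Pr where Pr: "is_model D p IC Pr" "PT Pr D T = ?L"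
      using construct[OF fin assms(3) assms(1) assms(4) g] by blast
    have e: "(\<Sum>w\<in>{w\<in>Pow D. T\<subseteq>w}. Pr w) = ?L" using Pr(2) unfolding PT_def .
    have "?L \<in> ?M" using Pr(1) e[symmetric] by blast
    thus ?thesis unfolding pm by (rule cInf_eq_minimum) (rule lb)
  qed
  show ?thesis using eq low by blast
qed

end
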